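(* Let $G$ be a $(P_2\cup P_4)$-free graph. Then $\chi(G)\le\frac{\omega(G)^3-\omega(G)^2+2\omega(G)}{2}$.
   Context: All graphs are finite, simple and undirected. $P_n$ is the path on $n$ vertices and $P_2\cup P_4$ is the disjoint union of $P_2$ and $P_4$. $G$ is $(P_2\cup P_4)$-free if it has no induced subgraph isomorphic to $P_2\cup P_4$. $\chi$ is the chromatic number and $\omega$ the clique number. *)

theory Defs
  imports Main
begin

definition simple_graph :: "'a set \<Rightarrow> ('a \<Rightarrow> 'a \<Rightarrow> bool) \<Rightarrow> bool" where
  "simple_graph V E \<longleftrightarrow> finite V \<and> (\<forall>x y. E x y \<longrightarrow> E y x) \<and> (\<forall>x. \<not> E x x)
     \<and> (\<forall>x y. E x y \<longrightarrow> x \<in> V \<and> y \<in> V)"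

definition contains_induced ::
  "'a set \<Rightarrow> ('a \<Rightarrow> 'a \<Rightarrow> bool) \<Rightarrow> 'b set \<Rightarrow> ('b \<Rightarrow> 'b \<Rightarrow> bool) \<Rightarrow> bool" where
  "contains_induced V E VH EH \<longleftrightarrow>
     (\<exists>\<phi>. inj_on \<phi> VH \<and> \<phi> ` VH \<subseteq> V \<and> (\<forall>x\<in>VH. \<forall>y\<in>VH. E (\<phi> x) (\<phi> y) \<longleftrightarrow> EH x y))"

definition P2_P4_verts :: "nat set" where
  "P2_P4_verts = {0..5}"

definition P2_P4_edge :: "nat \<Rightarrow> nat \<Rightarrow> bool" where
  "P2_P4_edge x y \<longleftrightarrow> {x, y} \<in> {{0,1}, {2,3}, {3,4}, {4,5}}"

definition P2_P4_free :: "'a set \<Rightarrow> ('a \<Rightarrow> 'a \<Rightarrow> bool) \<Rightarrow> bool" where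
  "P2_P4_free V E \<longleftrightarrow> \<not> contains_induced V E P2_P4_verts P2_P4_edge"

definition clique :: "'a set \<Rightarrow> ('a \<Rightarrow> 'a \<Rightarrow> bool) \<Rightarrow> 'a set \<Rightarrow> bool" where
  "clique V E K \<longleftrightarrow> K \<subseteq> V \<and> (\<forall>x\<in>K. \<forall>y\<in>K. x \<noteq> y \<longrightarrow> E x y)"

definition clique_number :: "'a set \<Rightarrow> ('a \<Rightarrow> 'a \<Rightarrow> bool) \<Rightarrow> nat" where
  "clique_number V E = Max (card ` {K. clique V E K})"

definition proper_colouring :: "'a set \<Rightarrow> ('a \<Rightarrow> 'a \<Rightarrow> bool) \<Rightarrow> nat \<Rightarrow> ('a \<Rightarrow> nat) \<Rightarrow> bool" where
  "proper_colouring V E k f \<longleftrightarrow> f ` V \<subseteq> {..<k} \<and> (\<forall>x\<in>V. \<forall>y\<in>V. E x y \<longrightarrow> f x \<noteq> f y)"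

definition chromatic_number :: "'a set \<Rightarrow> ('a \<Rightarrow> 'a \<Rightarrow> bool) \<Rightarrow> nat" where
  "chromatic_number V E = (LEAST k. \<exists>f. proper_colouring V E k f)"

end

theory Submission
  imports Defs
begin

definition p4free :: "'a set \<Rightarrow> ('a \<Rightarrow> 'a \<Rightarrow> bool) \<Rightarrow> bool" where
  "p4free U E \<longleftrightarrow> (\<forall>w\<in>U. \<forall>x\<in>U. \<forall>y\<in>U. \<forall>z\<in>U.
     \<not> (E w x \<and> E x y \<and> E y z \<and> \<not> E w y \<and> \<not> E w z \<and> \<not> E x z))"

definition cl :: "('a \<Rightarrow> 'a \<Rightarrow> bool) \<Rightarrow> 'a set \<Rightarrow> bool" where
  "cl E C \<longleftrightarrow> (\<forall>x\<in>C. \<forall>y\<in>C. x \<noteq> y \<longrightarrow> E x y)"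

lemma mis_meets_clique:
  assumes sym: "\<And>x y. E x y \<Longrightarrow> E y x"
    and fin: "finite W" and p4: "p4free W E"
    and KW: "K \<subseteq> W" and Kcl: "cl E K" and Kmax: "\<forall>v\<in>W-K. \<exists>k\<in>K. \<not> E v k"
    and SW: "S \<subseteq> W" and Sind: "\<forall>x\<in>S. \<forall>y\<in>S. \<not> E x y" and Smax: "\<forall>v\<in>W-S. \<exists>s\<in>S. E v s"
    and Kne: "K \<noteq> {}"
  shows "K \<inter> S \<noteq> {}"
proof
  assume disj: "K \<inter> S = {}"
  define f where "f s = card {k\<in>K. E s k}" for s
  from Kne obtain k0 where "k0 \<in> K" by blast
  with KW disj Smax obtain s0 where "s0 \<in> S" by blast
  have "finite S" using fin SW finite_subset by blast
  then obtain s where sS: "s \<in> S" and smax: "\<forall>s'\<in>S. f s' \<le> f s"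
  proof -
    have ne: "f ` S \<noteq> {}" using \<open>s0 \<in> S\<close> by blast
    have fi: "finite (f ` S)" using \<open>finite S\<close> by simp
    have "Max (f ` S) \<in> f ` S" using Max_in[OF fi ne] .
    then obtain s where "s \<in> S" "f s = Max (f ` S)" by force
    moreover have "\<forall>s'\<in>S. f s' \<le> Max (f ` S)" using fi by simp
    ultimately show ?thesis using that by metis
  qed
  have "s \<in> W - K" using sS SW disj by blast
  with Kmax obtain k1 where k1: "k1 \<in> K" "\<not> E s k1" by blast
  have "k1 \<in> W - S" using k1 KW disj by blast
  with Smax obtain s' where s': "s' \<in> S" "E k1 s'" by blast
  have ex: "\<exists>k2\<in>K. E s k2 \<and> \<not> E s' k2"
  proof (rule ccontr)
    assume "\<not> ?thesis"
    hence sub: "{k\<in>K. E s k} \<subseteq> {k\<in>K. E s' k}" by blast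
    have "k1 \<in> {k\<in>K. E s' k}" "k1 \<notin> {k\<in>K. E s k}" using k1 s' sym by auto
    hence "{k\<in>K. E s k} \<subset> {k\<in>K. E s' k}" using sub by blast
    moreover have "finite K" using fin KW finite_subset by blast
    ultimately have "f s < f s'" unfolding f_def by (simp add: psubset_card_mono)
    with smax s' show False by force
  qed
  then obtain k2 where k2: "k2 \<in> K" "E s k2" "\<not> E s' k2" by blast
  have "k2 \<noteq> k1" using k1 k2 by blast
  hence "E k2 k1" using Kcl k1 k2 unfolding cl_def by blast
  have "\<not> E s s'" using Sind sS s' by blast
  have "\<not> E k2 s'" using k2 sym by blast
  have "s \<in> W" "k2 \<in> W" "k1 \<in> W" "s' \<in> W" using sS k1 k2 s' KW SW by auto
  have "\<not> (E s k2 \<and> E k2 k1 \<and> E k1 s' \<and> \<not> E s k1 \<and> \<not> E s s' \<and> \<not> E k2 s')"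
    using p4[unfolded p4free_def, rule_format, of s k2 k1 s'] \<open>s \<in> W\<close> \<open>k2 \<in> W\<close> \<open>k1 \<in> W\<close> \<open>s' \<in> W\<close>
    by blast
  thus False
    using k2 \<open>E k2 k1\<close> s' k1 \<open>\<not> E s s'\<close> \<open>\<not> E k2 s'\<close> by blast
qed


lemma p4free_subset: "p4free U E \<Longrightarrow> W \<subseteq> U \<Longrightarrow> p4free W E"
  unfolding p4free_def by blast

lemma exists_maximal_indep:
  assumes "finite W" and irr: "\<And>x. \<not> E x x" and sym: "\<And>x y. E x y \<Longrightarrow> E y x"
  obtains S where "S \<subseteq> W" "\<forall>x\<in>S. \<forall>y\<in>S. \<not> E x y" "\<forall>v\<in>W-S. \<exists>s\<in>S. E v s"
proof -
  let ?A = "{S. S \<subseteq> W \<and> (\<forall>x\<in>S. \<forall>y\<in>S. \<not> E x y)}"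
  have "?A \<subseteq> Pow W" by blast
  hence "finite ?A" using assms(1) finite_subset by blast
  moreover have "{} \<in> ?A" by simp
  ultimately have "\<exists>m\<in>?A. \<forall>b\<in>?A. m \<le> b \<longrightarrow> m = b"
    by (intro finite_has_maximal) auto
  then obtain S where S: "S \<in> ?A" and m: "\<forall>b\<in>?A. S \<le> b \<longrightarrow> S = b"
    by blast
  have "\<forall>v\<in>W-S. \<exists>s\<in>S. E v s"
  proof
    fix v assume v: "v \<in> W - S"
    show "\<exists>s\<in>S. E v s"
    proof (rule ccontr)
      assume "\<not> ?thesis"
      hence a1: "\<forall>s\<in>S. \<not> E v s" by blast
      hence "\<forall>s\<in>S. \<not> E s v" using sym by meson
      hence "\<forall>s\<in>S. \<not> E v s \<and> \<not> E s v" using a1 by blast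
      hence h: "\<forall>s\<in>S. \<not> E v s \<and> \<not> E s v" .
      have h2: "\<forall>x\<in>S. \<forall>y\<in>S. \<not> E x y" "S \<subseteq> W" using S by blast+
      have "insert v S \<subseteq> W" using h2 v by blast
      moreover have "\<forall>x\<in>insert v S. \<forall>y\<in>insert v S. \<not> E x y"
        using h h2(1) irr[of v] by simp
      ultimately have iA: "insert v S \<in> ?A" by simp
      have "S = insert v S" using m[rule_format, OF iA] by blast
      with v show False by blast
    qed
  qed
  moreover from S have "S \<subseteq> W" "\<forall>x\<in>S. \<forall>y\<in>S. \<not> E x y" by auto
  ultimately show ?thesis using that[of S] by blast
qed

lemma exists_maximal_clique:
  assumes "finite W" and "C \<subseteq> W" and "cl E C" and sym: "\<And>x y. E x y \<Longrightarrow> E y x"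
  obtains K where "C \<subseteq> K" "K \<subseteq> W" "cl E K" "\<forall>v\<in>W-K. \<exists>k\<in>K. \<not> E v k"
proof -
  let ?A = "{K. C \<subseteq> K \<and> K \<subseteq> W \<and> cl E K}"
  have "?A \<subseteq> Pow W" by blast
  hence "finite ?A" using assms(1) finite_subset by blast
  moreover have "C \<in> ?A" using assms by simp
  ultimately have "\<exists>m\<in>?A. C \<le> m \<and> (\<forall>b\<in>?A. m \<le> b \<longrightarrow> m = b)"
    by (intro finite_has_maximal2) auto
  then obtain K where S: "K \<in> ?A" and m: "\<forall>b\<in>?A. K \<le> b \<longrightarrow> K = b"
    by blast
  have "\<forall>v\<in>W-K. \<exists>k\<in>K. \<not> E v k"
  proof
    fix v assume v: "v \<in> W - K"
    show "\<exists>k\<in>K. \<not> E v k"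
    proof (rule ccontr)
      assume "\<not> ?thesis"
      hence a1: "\<forall>k\<in>K. E v k" by blast
      hence "\<forall>k\<in>K. E k v" using sym by meson
      hence iA: "insert v K \<in> ?A" using S v a1 unfolding cl_def by auto
      have "K = insert v K" using m[rule_format, OF iA] by blast
      with v show False by blast
    qed
  qed
  moreover from S have "C \<subseteq> K" "K \<subseteq> W" "cl E K" by auto
  ultimately show ?thesis using that[of K] by blast
qed

lemma p4free_colour:
  assumes sym: "\<And>x y. E x y \<Longrightarrow> E y x" and irr: "\<And>x. \<not> E x x"
    and fin: "finite U" and p4: "p4free U E"
  shows "W \<subseteq> U \<Longrightarrow> (\<forall>C. C \<subseteq> W \<and> cl E C \<longrightarrow> card C \<le> n) \<Longrightarrow>
     \<exists>f. (\<forall>x\<in>W. f x < n) \<and> (\<forall>x\<in>W. \<forall>y\<in>W. E x y \<longrightarrow> f x \<noteq> f y)"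
proof (induction n arbitrary: W)
  case 0
  have "W = {}"
  proof (rule ccontr)
    assume "W \<noteq> {}"
    then obtain x where "x \<in> W" by blast
    hence "{x} \<subseteq> W \<and> cl E {x}" unfolding cl_def by simp
    hence "card {x} \<le> 0" using "0.prems"(2) by simp
    thus False by simp
  qed
  thus ?case by simp
next
  case (Suc n)
  have finW: "finite W" using Suc.prems(1) fin finite_subset by blast
  obtain S where SW: "S \<subseteq> W" and Sind: "\<forall>x\<in>S. \<forall>y\<in>S. \<not> E x y"
    and Smax: "\<forall>v\<in>W-S. \<exists>s\<in>S. E v s"
    using exists_maximal_indep[OF finW, of E] irr sym by blast
  have p4W: "p4free W E" using p4free_subset[OF p4 Suc.prems(1)] .
  have "\<forall>C. C \<subseteq> W - S \<and> cl E C \<longrightarrow> card C \<le> n"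
  proof (intro allI impI)
    fix C assume C: "C \<subseteq> W - S \<and> cl E C"
    show "card C \<le> n"
    proof (cases "C = {}")
      case True thus ?thesis by simp
    next
      case False
      have "C \<subseteq> W" using C by blast
      then obtain K where K: "C \<subseteq> K" "K \<subseteq> W" "cl E K" "\<forall>v\<in>W-K. \<exists>k\<in>K. \<not> E v k"
        using exists_maximal_clique[OF finW, of C E] C sym by blast
      have "K \<noteq> {}" using K(1) False by blast
      hence "K \<inter> S \<noteq> {}"
        using mis_meets_clique[OF sym finW p4W K(2,3,4) SW Sind Smax] by simp
      then obtain s where s: "s \<in> K" "s \<in> S" by blast
      have "s \<notin> C" using s C by blast
      have "insert s C \<subseteq> K" using K(1) s by blast
      hence "insert s C \<subseteq> W \<and> cl E (insert s C)"
        using K(2,3) unfolding cl_def by blast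
      hence "card (insert s C) \<le> Suc n" using Suc.prems(2) by simp
      moreover have "finite C" using finW \<open>C \<subseteq> W\<close> finite_subset by blast
      ultimately show ?thesis using \<open>s \<notin> C\<close> by simp
    qed
  qed
  moreover have "W - S \<subseteq> U" using Suc.prems(1) by blast
  ultimately have "\<exists>f. (\<forall>x\<in>W-S. f x < n) \<and> (\<forall>x\<in>W-S. \<forall>y\<in>W-S. E x y \<longrightarrow> f x \<noteq> f y)"
    using Suc.IH by simp
  then obtain f where f: "\<forall>x\<in>W-S. f x < n"
    "\<forall>x\<in>W-S. \<forall>y\<in>W-S. E x y \<longrightarrow> f x \<noteq> f y" by blast
  define g where "g x = (if x \<in> S then n else f x)" for x
  have "\<forall>x\<in>W. g x < Suc n" using f(1) unfolding g_def by (simp add: less_SucI)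
  moreover have "\<forall>x\<in>W. \<forall>y\<in>W. E x y \<longrightarrow> g x \<noteq> g y"
  proof (intro ballI impI)
    fix x y assume xy: "x \<in> W" "y \<in> W" "E x y"
    show "g x \<noteq> g y"
    proof (cases "x \<in> S"; cases "y \<in> S")
      assume "x \<in> S" "y \<in> S" thus ?thesis using Sind xy(3) by blast
    next
      assume a: "x \<in> S" "y \<notin> S"
      hence "f y < n" using f(1) xy by blast
      thus ?thesis using a unfolding g_def by simp
    next
      assume a: "x \<notin> S" "y \<in> S"
      hence "f x < n" using f(1) xy by blast
      thus ?thesis using a unfolding g_def by simp
    next
      assume "x \<notin> S" "y \<notin> S" thus ?thesis using f(2) xy unfolding g_def by simp
    qed
  qed
  ultimately show ?case by blast
qed


lemma P2_P4_edge_iff: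
  "P2_P4_edge i j \<longleftrightarrow> (i,j) \<in> {(0,1),(1,0),(2,3),(3,2),(3,4),(4,3),(4,5),(5,4)}"
  unfolding P2_P4_edge_def by (auto simp: doubleton_eq_iff)

lemma p2p4_found:
  assumes sg: "simple_graph V E"
    and V: "a \<in> V" "b \<in> V" "w \<in> V" "x \<in> V" "y \<in> V" "z \<in> V"
    and ab: "E a b"
    and na: "\<not> E w a" "\<not> E x a" "\<not> E y a" "\<not> E z a"
    and nb: "\<not> E w b" "\<not> E x b" "\<not> E y b" "\<not> E z b"
    and p: "E w x" "E x y" "E y z" "\<not> E w y" "\<not> E w z" "\<not> E x z"
  shows "contains_induced V E P2_P4_verts P2_P4_edge"
proof -
  have sym: "\<And>u v. E u v \<Longrightarrow> E v u" and irr: "\<And>u. \<not> E u u"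
    using sg unfolding simple_graph_def by blast+
  have s1: "E b a" "E x w" "E y x" "E z y" using ab p sym by blast+
  have s2: "\<not> E a w" "\<not> E a x" "\<not> E a y" "\<not> E a z"
           "\<not> E b w" "\<not> E b x" "\<not> E b y" "\<not> E b z"
           "\<not> E y w" "\<not> E z w" "\<not> E z x"
    using na nb p sym by blast+
  have i: "\<not> E a a" "\<not> E b b" "\<not> E w w" "\<not> E x x" "\<not> E y y" "\<not> E z z" using irr by blast+
  have d: "a \<noteq> b" "a \<noteq> w" "a \<noteq> x" "a \<noteq> y" "a \<noteq> z" "b \<noteq> w" "b \<noteq> x" "b \<noteq> y" "b \<noteq> z"
     "w \<noteq> x" "w \<noteq> y" "w \<noteq> z" "x \<noteq> y" "x \<noteq> z" "y \<noteq> z"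
    using ab na nb p i s1 s2 by metis+
  define \<phi> where "\<phi> n = [a,b,w,x,y,z] ! n" for n
  have vs: "P2_P4_verts = {0,1,2,3,4,5}" unfolding P2_P4_verts_def by auto
  have "inj_on \<phi> P2_P4_verts" unfolding vs inj_on_def \<phi>_def using d by auto
  moreover have "\<phi> ` P2_P4_verts \<subseteq> V" unfolding vs \<phi>_def using V by auto
  moreover have "\<forall>i\<in>P2_P4_verts. \<forall>j\<in>P2_P4_verts. E (\<phi> i) (\<phi> j) \<longleftrightarrow> P2_P4_edge i j"
    unfolding vs \<phi>_def P2_P4_edge_iff using ab na nb p s1 s2 i by simp
  ultimately show ?thesis unfolding contains_induced_def by blast
qed

lemma chrom_le:
  assumes fin: "finite (g ` V)" and pr: "\<forall>x\<in>V. \<forall>y\<in>V. E x y \<longrightarrow> g x \<noteq> g y"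
  shows "chromatic_number V E \<le> card (g ` V)"
proof -
  obtain h where h: "bij_betw h (g ` V) {..<card (g ` V)}"
    using finite_same_card_bij[OF fin, of "{..<card (g ` V)}"] by auto
  have "proper_colouring V E (card (g ` V)) (h \<circ> g)"
    unfolding proper_colouring_def
  proof
    show "(h \<circ> g) ` V \<subseteq> {..<card (g ` V)}" using h bij_betw_imp_surj_on by fastforce
    show "\<forall>x\<in>V. \<forall>y\<in>V. E x y \<longrightarrow> (h \<circ> g) x \<noteq> (h \<circ> g) y"
    proof (intro ballI impI)
      fix x y assume "x \<in> V" "y \<in> V" "E x y"
      hence "g x \<noteq> g y" using pr by blast
      moreover have "inj_on h (g ` V)" using h bij_betw_def by blast
      ultimately show "(h \<circ> g) x \<noteq> (h \<circ> g) y" using \<open>x \<in> V\<close> \<open>y \<in> V\<close>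
        by (simp add: inj_on_eq_iff)
    qed
  qed
  hence "\<exists>f. proper_colouring V E (card (g ` V)) f" by blast
  thus ?thesis unfolding chromatic_number_def by (rule Least_le)
qed


lemma arith_bound: "2 * (w + (w choose 2) * w) \<le> w ^ 3 - w ^ 2 + 2 * (w::nat)"
proof -
  have "2 * (w choose 2) = w * (w - 1)"
    unfolding choose_two by (cases w) auto
  hence "2 * (w + (w choose 2) * w) = 2 * w + w * (w - 1) * w" by (simp add: algebra_simps)
  also have "\<dots> = w ^ 3 - w ^ 2 + 2 * w"
  proof (cases w)
    case 0 thus ?thesis by simp
  next
    case (Suc m)
    have "w ^ 3 = w ^ 2 * w" by (simp add: power3_eq_cube power2_eq_square)
    hence "w ^ 3 - w ^ 2 = w ^ 2 * (w - 1)" by (simp add: diff_mult_distrib2)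
    thus ?thesis by (simp add: power2_eq_square algebra_simps)
  qed
  finally show ?thesis by simp
qed

theorem corollary4p3:
  fixes V :: "'a set" and E :: "'a \<Rightarrow> 'a \<Rightarrow> bool"
  assumes "simple_graph V E" and "P2_P4_free V E"
  shows "2 * chromatic_number V E \<le>
           clique_number V E ^ 3 - clique_number V E ^ 2 + 2 * clique_number V E"
proof -
  note sg = assms(1)
  have finV: "finite V" and sym: "\<And>u v. E u v \<Longrightarrow> E v u" and irr: "\<And>u. \<not> E u u"
    and inV: "\<And>u v. E u v \<Longrightarrow> u \<in> V \<and> v \<in> V"
    using sg unfolding simple_graph_def by blast+
  define \<omega> where "\<omega> = clique_number V E"
  have "{K. clique V E K} \<subseteq> Pow V" unfolding clique_def by blast
  hence clfin: "finite {K. clique V E K}" using finV finite_subset by blast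
  have "{} \<in> {K. clique V E K}" unfolding clique_def by simp
  hence ne: "card ` {K. clique V E K} \<noteq> {}" by blast
  have fi: "finite (card ` {K. clique V E K})" using clfin by simp
  have le: "\<And>K. clique V E K \<Longrightarrow> card K \<le> \<omega>"
    unfolding \<omega>_def clique_number_def using fi by simp
  have "\<omega> \<in> card ` {K. clique V E K}" unfolding \<omega>_def clique_number_def using Max_in[OF fi ne] .
  then obtain K0 where K0: "clique V E K0" and cK0: "card K0 = \<omega>" by blast
  have K0V: "K0 \<subseteq> V" using K0 unfolding clique_def by blast
  have K0cl: "\<And>x y. x \<in> K0 \<Longrightarrow> y \<in> K0 \<Longrightarrow> x \<noteq> y \<Longrightarrow> E x y" using K0 unfolding clique_def by blast
  have finK0: "finite K0" using K0V finV finite_subset by blast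
  define N where "N u = {k\<in>K0. \<not> E u k}" for u
  have NK0: "\<And>u. N u \<subseteq> K0" unfolding N_def by blast
  have Nne: "N u \<noteq> {}" if u: "u \<in> V" for u
  proof
    assume N0: "N u = {}"
    hence adj: "\<forall>k\<in>K0. E u k" unfolding N_def by blast
    hence "u \<notin> K0" using irr by blast
    have adj2: "\<forall>k\<in>K0. E k u" using adj sym by meson
    have "insert u K0 \<subseteq> V" using K0V u by blast
    moreover have "\<forall>x\<in>insert u K0. \<forall>y\<in>insert u K0. x \<noteq> y \<longrightarrow> E x y"
      using adj adj2 K0cl by auto
    ultimately have "clique V E (insert u K0)" unfolding clique_def by blast
    hence "card (insert u K0) \<le> \<omega>" by (rule le)
    thus False using \<open>u \<notin> K0\<close> finK0 cK0 by simp
  qed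
  define W where "W P = {x\<in>V. \<forall>a\<in>P. \<not> E x a}" for P
  have colP: "\<exists>f. (\<forall>x\<in>W P. f x < \<omega>) \<and> (\<forall>x\<in>W P. \<forall>y\<in>W P. E x y \<longrightarrow> f x \<noteq> f y)"
    if P: "P \<subseteq> K0" "card P = 2" for P
  proof -
    obtain a b where ab: "P = {a, b}" "a \<noteq> b" using P(2) by (meson card_2_iff)
    have "a \<in> P" "b \<in> P" using ab(1) by simp_all
    hence abK: "a \<in> K0" "b \<in> K0" using P(1) by (simp_all add: subset_iff)
    hence abV: "a \<in> V" "b \<in> V" using K0V by (simp_all add: subset_iff)
    have Eab: "E a b" using K0cl[OF abK ab(2)] .
    have finW: "finite (W P)" unfolding W_def using finV by simp
    have p4: "p4free (W P) E" unfolding p4free_def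
    proof (intro ballI notI)
      fix w x y z assume wxyz: "w \<in> W P" "x \<in> W P" "y \<in> W P" "z \<in> W P"
        and pp: "E w x \<and> E x y \<and> E y z \<and> \<not> E w y \<and> \<not> E w z \<and> \<not> E x z"
      have vv: "w \<in> V" "x \<in> V" "y \<in> V" "z \<in> V" using wxyz unfolding W_def by auto
      have nn: "\<not> E w a" "\<not> E x a" "\<not> E y a" "\<not> E z a"
                    "\<not> E w b" "\<not> E x b" "\<not> E y b" "\<not> E z b"
        using wxyz unfolding W_def ab(1) by auto
      have pp': "E w x" "E x y" "E y z" "\<not> E w y" "\<not> E w z" "\<not> E x z" using pp by simp_all
      have "contains_induced V E P2_P4_verts P2_P4_edge"
        by (rule p2p4_found[OF sg abV(1,2) vv Eab nn pp'])
      thus False using assms(2) unfolding P2_P4_free_def by blast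
    qed
    have cls: "\<forall>C. C \<subseteq> W P \<and> cl E C \<longrightarrow> card C \<le> \<omega>"
    proof (intro allI impI)
      fix C assume "C \<subseteq> W P \<and> cl E C"
      hence "clique V E C" unfolding clique_def cl_def W_def by blast
      thus "card C \<le> \<omega>" by (rule le)
    qed
    show ?thesis by (rule p4free_colour[OF sym irr finW p4 order_refl cls])
  qed
  define F where "F P = (SOME f. (\<forall>x\<in>W P. f x < \<omega>) \<and> (\<forall>x\<in>W P. \<forall>y\<in>W P. E x y \<longrightarrow> f x \<noteq> f y))" for P
  have Fprop: "(\<forall>x\<in>W P. F P x < \<omega>) \<and> (\<forall>x\<in>W P. \<forall>y\<in>W P. E x y \<longrightarrow> F P x \<noteq> F P y)"
    if "P \<subseteq> K0" "card P = 2" for P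
    unfolding F_def by (rule someI_ex[OF colP[OF that]])
  define Pu where "Pu u = (SOME P. P \<subseteq> N u \<and> card P = 2)" for u
  have Pprop: "Pu u \<subseteq> N u \<and> card (Pu u) = 2" if "\<not> card (N u) \<le> 1" for u
  proof -
    have "2 \<le> card (N u)" using that by simp
    then obtain T where "T \<subseteq> N u" "card T = 2" by (rule obtain_subset_with_card_n)
    hence "\<exists>P. P \<subseteq> N u \<and> card P = 2" by blast
    thus ?thesis unfolding Pu_def by (rule someI_ex)
  qed
  have PuW: "u \<in> W (Pu u)" if "u \<in> V" "\<not> card (N u) \<le> 1" for u
    using Pprop[OF that(2)] that(1) unfolding W_def N_def by blast
  define g where "g u = (if card (N u) \<le> 1 then Inl (the_elem (N u))
      else Inr (Pu u, F (Pu u) u))" for u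
  have single: "\<exists>k. N u = {k} \<and> k \<in> K0" if "u \<in> V" "card (N u) \<le> 1" for u
  proof -
    have "finite (N u)" using finK0 NK0 finite_subset by blast
    hence "card (N u) \<noteq> 0" using Nne[OF that(1)] by simp
    hence "card (N u) = 1" using that(2) by simp
    then obtain k where "N u = {k}" using card_1_singletonE by blast
    thus ?thesis using NK0 by blast
  qed
  let ?C = "Inl ` K0 \<union> Inr ` ({P. P \<subseteq> K0 \<and> card P = 2} \<times> {..<\<omega>})"
  have range: "g ` V \<subseteq> ?C"
  proof
    fix c assume "c \<in> g ` V"
    then obtain u where u: "u \<in> V" "c = g u" by blast
    show "c \<in> ?C"
    proof (cases "card (N u) \<le> 1")
      case True
      then obtain k where "N u = {k}" "k \<in> K0" using single u(1) by blast
      thus ?thesis using u True unfolding g_def by simp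
    next
      case False
      have P: "Pu u \<subseteq> K0" "card (Pu u) = 2" using Pprop[OF False] NK0 by blast+
      have "F (Pu u) u < \<omega>" using Fprop[OF P] PuW[OF u(1) False] by blast
      thus ?thesis using u False P unfolding g_def by simp
    qed
  qed
  have proper: "\<forall>x\<in>V. \<forall>y\<in>V. E x y \<longrightarrow> g x \<noteq> g y"
  proof (intro ballI impI)
    fix u v assume uv: "u \<in> V" "v \<in> V" "E u v"
    show "g u \<noteq> g v"
    proof (cases "card (N u) \<le> 1"; cases "card (N v) \<le> 1")
      assume cu: "card (N u) \<le> 1" and cv: "card (N v) \<le> 1"
      obtain k where k: "N u = {k}" "k \<in> K0" using single uv(1) cu by blast
      obtain k' where k': "N v = {k'}" "k' \<in> K0" using single uv(2) cv by blast
      show ?thesis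
      proof
        assume "g u = g v"
        hence "k = k'" using k k' cu cv unfolding g_def by simp
        have uadj: "\<forall>k''\<in>K0 - {k}. E u k''" using k unfolding N_def by blast
        have vadj: "\<forall>k''\<in>K0 - {k}. E v k''" using k' \<open>k = k'\<close> unfolding N_def by blast
        have uK: "u \<notin> K0 - {k}"
        proof
          assume "u \<in> K0 - {k}"
          hence "u \<in> N u" unfolding N_def using irr by blast
          thus False using k \<open>u \<in> K0 - {k}\<close> by blast
        qed
        have vK: "v \<notin> K0 - {k}"
        proof
          assume "v \<in> K0 - {k}"
          hence "v \<in> N v" unfolding N_def using irr by blast
          thus False using k' \<open>k = k'\<close> \<open>v \<in> K0 - {k}\<close> by blast
        qed
        have "u \<noteq> v" using uv(3) irr by blast
        have "clique V E (insert u (insert v (K0 - {k})))"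
          unfolding clique_def
        proof (intro conjI ballI impI)
          show "insert u (insert v (K0 - {k})) \<subseteq> V" using uv K0V by blast
        next
          fix x y assume x: "x \<in> insert u (insert v (K0 - {k}))"
            and y: "y \<in> insert u (insert v (K0 - {k}))" and xy: "x \<noteq> y"
          have vu: "E v u" using uv(3) sym by meson
          have ua: "\<forall>k''\<in>K0 - {k}. E k'' u" using uadj sym by meson
          have va: "\<forall>k''\<in>K0 - {k}. E k'' v" using vadj sym by meson
          show "E x y" using x y xy uv(3) vu uadj vadj ua va K0cl by blast
        qed
        hence "card (insert u (insert v (K0 - {k}))) \<le> \<omega>" by (rule le)
        moreover have "card (insert u (insert v (K0 - {k}))) = \<omega> + 1"
          using uK vK \<open>u \<noteq> v\<close> finK0 cK0 k(2)
          by (simp add: card_Diff_singleton) (metis One_nat_def Suc_pred card_gt_0_iff empty_iff)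
        ultimately show False by simp
      qed
    next
      assume "card (N u) \<le> 1" "\<not> card (N v) \<le> 1"
      thus ?thesis unfolding g_def by simp
    next
      assume "\<not> card (N u) \<le> 1" "card (N v) \<le> 1"
      thus ?thesis unfolding g_def by simp
    next
      assume cu: "\<not> card (N u) \<le> 1" and cv: "\<not> card (N v) \<le> 1"
      show ?thesis
      proof
        assume "g u = g v"
        moreover have "g u = Inr (Pu u, F (Pu u) u)" "g v = Inr (Pu v, F (Pu v) v)"
          using cu cv unfolding g_def by simp_all
        ultimately have pe: "(Pu u, F (Pu u) u) = (Pu v, F (Pu v) v)" by (metis sum.inject(2))
        have eq: "Pu u = Pu v" "F (Pu u) u = F (Pu v) v" using pe by (metis fst_conv, metis snd_conv)
        have P: "Pu u \<subseteq> K0" "card (Pu u) = 2" using Pprop[OF cu] NK0 by blast+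
        have "u \<in> W (Pu u)" "v \<in> W (Pu u)" using PuW[OF uv(1) cu] PuW[OF uv(2) cv] eq by auto
        hence "F (Pu u) u \<noteq> F (Pu u) v" using Fprop[OF P] uv(3) by blast
        thus False using eq by simp
      qed
    qed
  qed
  have finC: "finite ?C" using finK0 by simp
  have "card ?C \<le> card (Inl ` K0 :: ('a + 'a set \<times> nat) set)
      + card (Inr ` ({P. P \<subseteq> K0 \<and> card P = 2} \<times> {..<\<omega>}) :: ('a + 'a set \<times> nat) set)"
    by (rule card_Un_le)
  also have "\<dots> = \<omega> + (\<omega> choose 2) * \<omega>"
    by (simp add: card_image card_cartesian_product n_subsets[OF finK0] cK0)
  finally have cC: "card ?C \<le> \<omega> + (\<omega> choose 2) * \<omega>" .
  have "chromatic_number V E \<le> card (g ` V)"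
    using chrom_le[OF finite_subset[OF range finC] proper] .
  also have "\<dots> \<le> card ?C" using card_mono[OF finC range] .
  finally have "chromatic_number V E \<le> \<omega> + (\<omega> choose 2) * \<omega>" using cC by linarith
  hence "2 * chromatic_number V E \<le> 2 * (\<omega> + (\<omega> choose 2) * \<omega>)" by simp
  also have "\<dots> \<le> \<omega> ^ 3 - \<omega> ^ 2 + 2 * \<omega>" by (rule arith_bound)
  finally show ?thesis unfolding \<omega>_def .
qed

end
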